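(* Let $\epsilon>0$ be the parameter of instance $\mathcal P$. Then for any $\hat\epsilon\in[0,\epsilon]$, every $\hat\epsilon$-stationary point of instance $\mathcal P$ is also an $\hat\epsilon$-stationary point of the auxiliary problem (AP): $\min_x f_0(x)$ s.t. $Hx=0$.
   Context: A point $x^*$ is an $\hat\epsilon$-stationary point of a problem $\min f_0(x)+g(x)$ s.t. $Ax+b=0$ if for some $\gamma$, $\max\{\mathrm{dist}(0,\nabla f_0(x^* )+A^\top\gamma+\partial g(x^* )),\|Ax^*+b\|\}\le\hat\epsilon$. A point $x^*$ is an $\hat\epsilon$-stationary point of (AP) if $\max\{\|Hx^*\|,\min_{\gamma'}\|\nabla f_0(x^* )+H^\top\gamma'\|\}\le\hat\epsilon$. Instance $\mathcal P$: fix $\epsilon\in(0,1)$, $L_f>0$, integers $m_1\ge2$, $m_2\ge1$ with $m_1m_2$ even, $m=3m_1m_2$, an odd integer $\bar d\ge5$, $d=m\bar d$. Write $x=(x_1^\top,\dots,x_m^\top)^\top$, $x_i\in\mathbb R^{\bar d}$; $[z]_j$ is the $j$-th coordinate. $J_p\in\mathbb R^{(p-1)\times p}$ has $-1$ at $(k,k)$, $1$ at $(k,k+1)$, zero elsewhere. $H=mL_f(J_m\otimes I_{\bar d})$. $\mathcal M=\{im_1:i=1,\dots,3m_2-1\}$, $\mathcal M^C=\{1,\dots,m-1\}\setminus\mathcal M$, $\bar A=mL_f(J_{\mathcal M}\otimes I_{\bar d})$, $A=mL_f(J_{\mathcal M^C}\otimes I_{\bar d})$ with $J_{\mathcal M},J_{\mathcal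 M^C}$ the rows of $J_m$ indexed by $\mathcal M,\mathcal M^C$; $b=0$. Choose $\beta>(50\pi+1+\|A\|)\sqrt m\,\epsilon$; $g(x)=\beta\sum_{i\in\mathcal M}\|x_i-x_{i+1}\|_1$. $\Psi(u)=0$ ($u\le0$), $1-e^{-u^2}$ ($u>0$); $\Phi(v)=4\arctan v+2\pi$. For $z\in\mathbb R^{\bar d}$: $\varphi(z,1)=-\Psi(1)\Phi([z]_1)$, $\varphi(z,j)=\Psi(-[z]_{j-1})\Phi(-[z]_j)-\Psi([z]_{j-1})\Phi([z]_j)$ ($2\le j\le\bar d$); $h_i(z)=\varphi(z,1)+3\sum_{j=1}^{\lfloor\bar d/2\rfloor}\varphi(z,2j)$ for $1\le i\le m/3$, $h_i(z)=\varphi(z,1)$ for $m/3+1\le i\le 2m/3$, $h_i(z)=\varphi(z,1)+3\sum_{j=1}^{\lfloor\bar d/2\rfloor}\varphi(z,2j+1)$ for $2m/3+1\le i\le m$. $f_i(z)=\frac{300\pi\epsilon^2}{mL_f}h_i(\frac{\sqrt mL_fz}{150\pi\epsilon})$, $f_0(x)=\sum_{i=1}^mf_i(x_i)$. Instance $\mathcal P$ is $\min_xf_0(x)+g(x)$ s.t. $Ax+b=0$. *)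

theory Defs
  imports "HOL-Analysis.Analysis"
begin

text \<open>A vector in R^d is a function from an index type to real; only its values on an
explicit finite index set matter.\<close>

definition vnorm :: "'a set \<Rightarrow> ('a \<Rightarrow> real) \<Rightarrow> real" where
  "vnorm S v = sqrt (\<Sum>s\<in>S. (v s)^2)"

definition matvec :: "'c set \<Rightarrow> ('r \<Rightarrow> 'c \<Rightarrow> real) \<Rightarrow> ('c \<Rightarrow> real) \<Rightarrow> ('r \<Rightarrow> real)" where
  "matvec C M x = (\<lambda>r. \<Sum>c\<in>C. M r c * x c)"

definition tmatvec :: "'r set \<Rightarrow> ('r \<Rightarrow> 'c \<Rightarrow> real) \<Rightarrow> ('r \<Rightarrow> real) \<Rightarrow> ('c \<Rightarrow> real)" where
  "tmatvec R M y = (\<lambda>c. \<Sum>r\<in>R. M r c * y r)"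

definition opnorm :: "'r set \<Rightarrow> 'c set \<Rightarrow> ('r \<Rightarrow> 'c \<Rightarrow> real) \<Rightarrow> real" where
  "opnorm R C M = Sup {vnorm R (matvec C M x) | x. vnorm C x \<le> 1}"

definition grad :: "(('a \<Rightarrow> real) \<Rightarrow> real) \<Rightarrow> ('a \<Rightarrow> real) \<Rightarrow> ('a \<Rightarrow> real)" where
  "grad f x = (\<lambda>k. deriv (\<lambda>t. f (x(k := t))) (x k))"

definition subdiff :: "'a set \<Rightarrow> (('a \<Rightarrow> real) \<Rightarrow> real) \<Rightarrow> ('a \<Rightarrow> real) \<Rightarrow> ('a \<Rightarrow> real) set" where
  "subdiff I g x = {v. \<forall>y. g y \<ge> g x + (\<Sum>k\<in>I. v k * (y k - x k))}"

definition dist0 :: "'a set \<Rightarrow> ('a \<Rightarrow> real) set \<Rightarrow> real" where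
  "dist0 I S = Inf (vnorm I ` S)"

text \<open>eps-stationary point of  min f0(x) + g(x)  s.t.  Ax + b = 0
  (I: coordinates of x, R: rows of A).\<close>
definition eps_stat_P ::
  "'a set \<Rightarrow> 'r set \<Rightarrow> (('a \<Rightarrow> real) \<Rightarrow> real) \<Rightarrow> (('a \<Rightarrow> real) \<Rightarrow> real)
    \<Rightarrow> ('r \<Rightarrow> 'a \<Rightarrow> real) \<Rightarrow> ('r \<Rightarrow> real) \<Rightarrow> real \<Rightarrow> ('a \<Rightarrow> real) \<Rightarrow> bool" where
  "eps_stat_P I R f0 g A b e x \<longleftrightarrow>
     (\<exists>\<gamma>. max (dist0 I {(\<lambda>k. grad f0 x k + tmatvec R A \<gamma> k + v k) | v. v \<in> subdiff I g x})
               (vnorm R (\<lambda>r. matvec I A x r + b r)) \<le> e)"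

definition eps_stat_AP ::
  "'a set \<Rightarrow> 'r set \<Rightarrow> (('a \<Rightarrow> real) \<Rightarrow> real) \<Rightarrow> ('r \<Rightarrow> 'a \<Rightarrow> real) \<Rightarrow> real \<Rightarrow> ('a \<Rightarrow> real) \<Rightarrow> bool" where
  "eps_stat_AP I R f0 H e x \<longleftrightarrow>
     max (vnorm R (matvec I H x))
         (Inf {vnorm I (\<lambda>k. grad f0 x k + tmatvec R H \<gamma>' k) | \<gamma>'. True}) \<le> e"

text \<open>Vectors x in R^d, d = m * dbar, are indexed by pairs (i, j), i in {1..m} the block,
 j in {1..dbar} the coordinate inside block x_i.\<close>

definition coords :: "nat \<Rightarrow> nat \<Rightarrow> (nat \<times> nat) set" where
  "coords m dbar = {1..m} \<times> {1..dbar}"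

text \<open>Matrix J_p (rows 1..p-1, columns 1..p).\<close>
definition Jmat :: "nat \<Rightarrow> nat \<Rightarrow> real" where
  "Jmat k i = (if i = k then -1 else if i = k + 1 then 1 else 0)"

text \<open>c * (J \<otimes> I_dbar), with rows (k, j) and columns (i, j').\<close>
definition JkronI :: "real \<Rightarrow> (nat \<times> nat) \<Rightarrow> (nat \<times> nat) \<Rightarrow> real" where
  "JkronI c r s = c * Jmat (fst r) (fst s) * (if snd r = snd s then 1 else 0)"

definition Mset :: "nat \<Rightarrow> nat \<Rightarrow> nat set" where
  "Mset m1 m2 = {i * m1 | i. 1 \<le> i \<and> i \<le> 3 * m2 - 1}"

definition MCset :: "nat \<Rightarrow> nat \<Rightarrow> nat set" where
  "MCset m1 m2 = {1..3 * m1 * m2 - 1} - Mset m1 m2"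

text \<open>H = m L_f (J_m \<otimes> I): rows {1..m-1} x {1..dbar}.\<close>
definition Hrows :: "nat \<Rightarrow> nat \<Rightarrow> nat \<Rightarrow> (nat \<times> nat) set" where
  "Hrows m1 m2 dbar = {1..3 * m1 * m2 - 1} \<times> {1..dbar}"

definition Hmat :: "nat \<Rightarrow> nat \<Rightarrow> real \<Rightarrow> (nat \<times> nat) \<Rightarrow> (nat \<times> nat) \<Rightarrow> real" where
  "Hmat m1 m2 Lf = JkronI (real (3 * m1 * m2) * Lf)"

text \<open>A = m L_f (J_{M^C} \<otimes> I): rows M^C x {1..dbar}.\<close>
definition Arows :: "nat \<Rightarrow> nat \<Rightarrow> nat \<Rightarrow> (nat \<times> nat) set" where
  "Arows m1 m2 dbar = MCset m1 m2 \<times> {1..dbar}"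

definition Amat :: "nat \<Rightarrow> nat \<Rightarrow> real \<Rightarrow> (nat \<times> nat) \<Rightarrow> (nat \<times> nat) \<Rightarrow> real" where
  "Amat m1 m2 Lf = JkronI (real (3 * m1 * m2) * Lf)"

definition gP :: "nat \<Rightarrow> nat \<Rightarrow> nat \<Rightarrow> real \<Rightarrow> (nat \<times> nat \<Rightarrow> real) \<Rightarrow> real" where
  "gP m1 m2 dbar \<beta> x = \<beta> * (\<Sum>i\<in>Mset m1 m2. \<Sum>j=1..dbar. \<bar>x (i, j) - x (i + 1, j)\<bar>)"

definition Psi :: "real \<Rightarrow> real" where
  "Psi u = (if u \<le> 0 then 0 else 1 - exp (- (u^2)))"

definition Phi :: "real \<Rightarrow> real" where
  "Phi v = 4 * arctan v + 2 * pi"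

definition varphi :: "(nat \<Rightarrow> real) \<Rightarrow> nat \<Rightarrow> real" where
  "varphi z j = (if j = 1 then - Psi 1 * Phi (z 1)
                 else Psi (- z (j - 1)) * Phi (- z j) - Psi (z (j - 1)) * Phi (z j))"

definition hfun :: "nat \<Rightarrow> nat \<Rightarrow> nat \<Rightarrow> (nat \<Rightarrow> real) \<Rightarrow> real" where
  "hfun m dbar i z =
     (if 1 \<le> i \<and> i \<le> m div 3 then varphi z 1 + 3 * (\<Sum>j=1..dbar div 2. varphi z (2 * j))
      else if m div 3 + 1 \<le> i \<and> i \<le> 2 * m div 3 then varphi z 1
      else varphi z 1 + 3 * (\<Sum>j=1..dbar div 2. varphi z (2 * j + 1)))"

definition ffun :: "real \<Rightarrow> real \<Rightarrow> nat \<Rightarrow> nat \<Rightarrow> nat \<Rightarrow> (nat \<Rightarrow> real) \<Rightarrow> real" where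
  "ffun \<epsilon> Lf m dbar i z =
     300 * pi * \<epsilon>^2 / (real m * Lf) * hfun m dbar i (\<lambda>j. sqrt (real m) * Lf * z j / (150 * pi * \<epsilon>))"

definition f0P :: "real \<Rightarrow> real \<Rightarrow> nat \<Rightarrow> nat \<Rightarrow> nat \<Rightarrow> (nat \<times> nat \<Rightarrow> real) \<Rightarrow> real" where
  "f0P \<epsilon> Lf m1 m2 dbar x = (\<Sum>i=1..3 * m1 * m2. ffun \<epsilon> Lf (3 * m1 * m2) dbar i (\<lambda>j. x (i, j)))"

end

theory Submission
  imports Defs
begin


definition Psi' :: "real \<Rightarrow> real" where
  "Psi' u = (if u \<le> 0 then 0 else 2 * u * exp (- (u^2)))"

lemma Psi_deriv: "(Psi has_real_derivative Psi' u) (at u)"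
proof -
  consider "u < 0" | "u > 0" | "u = 0" by linarith
  then show ?thesis
  proof cases
    case 1
    have "((\<lambda>_. 0::real) has_real_derivative Psi' u) (at u)" using 1 by (simp add: Psi'_def)
    then show ?thesis
      apply (rule has_field_derivative_transform_within_open[where S="{..<0}"])
      using 1 by (auto simp: Psi_def Psi'_def)
  next
    case 2
    have "((\<lambda>u. 1 - exp (- (u^2))) has_real_derivative (- (exp (- (u^2)) * (- (2 * u))))) (at u)"
      by (auto intro!: derivative_eq_intros)
    then have "((\<lambda>u. 1 - exp (- (u^2))) has_real_derivative Psi' u) (at u)"
      using 2 by (simp add: Psi'_def mult.commute mult.left_commute)
    then show ?thesis
      apply (rule has_field_derivative_transform_within_open[where S="{0<..}"])
      using 2 by (auto simp: Psi_def)
  next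
    case 3
    have "((\<lambda>h. (Psi (0 + h) - Psi 0) / h) \<longlongrightarrow> 0) (at 0)"
    proof (rule Lim_null_comparison)
      show "\<forall>\<^sub>F h in at 0. norm ((Psi (0 + h) - Psi 0) / h) \<le> \<bar>h\<bar>"
      proof (rule always_eventually, intro allI)
        fix h :: real
        show "norm ((Psi (0 + h) - Psi 0) / h) \<le> \<bar>h\<bar>"
        proof (cases "h \<le> 0")
          case True then show ?thesis by (simp add: Psi_def)
        next
          case False
          have a: "1 - exp (- (h^2)) \<le> h^2" using exp_ge_add_one_self[of "- (h^2)"] by linarith
          have b: "0 \<le> 1 - exp (- (h^2))" by simp
          have "\<bar>(1 - exp (- (h^2))) / h\<bar> = (1 - exp (- (h^2))) / h" using False b by simp
          also have "\<dots> \<le> h^2 / h" using a False by (simp add: divide_right_mono)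
          also have "\<dots> = \<bar>h\<bar>" using False by (simp add: power2_eq_square)
          finally show ?thesis using False by (simp add: Psi_def)
        qed
      qed
      show "((\<lambda>h. \<bar>h\<bar>) \<longlongrightarrow> 0) (at (0::real))"
        using tendsto_rabs[OF tendsto_ident_at[of 0 UNIV]] by simp
    qed
    then show ?thesis using 3 by (simp add: DERIV_def Psi'_def)
  qed
qed

lemma Psi_ge0: "0 \<le> Psi u" by (simp add: Psi_def)
lemma Psi_le1: "Psi u \<le> 1" by (simp add: Psi_def)
lemma Psi_pm: "Psi (- u) + Psi u \<le> 1"
  by (cases "u \<le> 0") (auto simp: Psi_def)
lemma Psi'_ge0: "0 \<le> Psi' u" by (simp add: Psi'_def)
lemma Psi'_le1: "Psi' u \<le> 1"
proof (cases "u \<le> 0")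
  case False
  have "1 + u^2 \<le> exp (u^2)" by (rule exp_ge_add_one_self)
  moreover have "2 * u \<le> 1 + u^2" using sum_squares_ge_zero[of "u - 1" 0]
    by (simp add: power2_eq_square algebra_simps)
  ultimately have "2 * u \<le> exp (u^2)" by linarith
  then have "2 * u * exp (- (u^2)) \<le> exp (u^2) * exp (- (u^2))" by (simp add: mult_right_mono)
  also have "\<dots> = 1" by (simp add: exp_minus field_simps)
  finally show ?thesis using False by (simp add: Psi'_def)
qed (simp add: Psi'_def)
lemma Psi'_pm: "Psi' (- u) + Psi' u \<le> 1"
  using Psi'_le1[of u] Psi'_le1[of "-u"] by (cases "u \<le> 0") (auto simp: Psi'_def)

definition Phi' :: "real \<Rightarrow> real" where "Phi' v = 4 * inverse (1 + v^2)"

lemma Phi_deriv: "(Phi has_real_derivative Phi' v) (at v)"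
  unfolding Phi_def Phi'_def by (auto intro!: derivative_eq_intros DERIV_arctan)

lemma Phi_ge0: "0 \<le> Phi v" using arctan_bounded[of v] by (simp add: Phi_def)
lemma Phi_le: "Phi v \<le> 4 * pi" using arctan_bounded[of v] by (simp add: Phi_def)
lemma Phi'_ge0: "0 \<le> Phi' v" by (simp add: Phi'_def add_pos_nonneg)
lemma Phi'_le: "Phi' v \<le> 4"
proof -
  have "inverse (1 + v^2) \<le> 1" by (simp add: add_pos_nonneg inverse_le_1_iff)
  then show ?thesis by (simp add: Phi'_def)
qed



lemma Psi_chain[derivative_intros]:
  "(f has_real_derivative f') (at x) \<Longrightarrow> ((\<lambda>x. Psi (f x)) has_real_derivative Psi' (f x) * f') (at x)"
  by (rule DERIV_chain2[OF Psi_deriv])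
lemma Phi_chain[derivative_intros]:
  "(f has_real_derivative f') (at x) \<Longrightarrow> ((\<lambda>x. Phi (f x)) has_real_derivative Phi' (f x) * f') (at x)"
  by (rule DERIV_chain2[OF Phi_deriv])

lemma bnd1: "\<bar>p * (q * (-1)) - p' * q'\<bar> \<le> c"
  if "0 \<le> p" "0 \<le> p'" "p + p' \<le> 1" "0 \<le> q" "q \<le> c" "0 \<le> q'" "q' \<le> c" for p p' q q' c :: real
proof -
  have "\<bar>p * (q * (-1)) - p' * q'\<bar> = p * q + p' * q'"
  proof -
    have "0 \<le> p * q" "0 \<le> p' * q'" using that by auto
    then show ?thesis by (simp add: abs_if)
  qed
  also have "\<dots> \<le> p * c + p' * c" using that by (intro add_mono mult_left_mono) auto
  also have "\<dots> = (p + p') * c" by (simp add: algebra_simps)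
  also have "\<dots> \<le> c" using that by (simp add: mult_left_le_one_le order_trans)
  finally show ?thesis .
qed

lemma varphi_slice:
  assumes "1 \<le> l"
  shows "\<exists>D. ((\<lambda>t. varphi (z(j:=t)) l) has_real_derivative D) (at t) \<and>
             \<bar>D\<bar> \<le> (if l = j \<or> l = j + 1 then 4 * pi else 0)"
proof -
  have pi4: "4 \<le> 4 * pi" using pi_gt3 by simp
  consider "l = 1" "j = 1" | "l = 1" "j \<noteq> 1" | "2 \<le> l" "j = l" | "2 \<le> l" "j = l - 1"
    | "2 \<le> l" "j \<noteq> l" "j \<noteq> l - 1" using assms by linarith
  then show ?thesis
  proof cases
    case 1
    have e: "(\<lambda>t. varphi (z(j:=t)) l) = (\<lambda>t. - Psi 1 * Phi t)" using 1 by (auto simp: varphi_def)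
    have "((\<lambda>t. - Psi 1 * Phi t) has_real_derivative - Psi 1 * (Phi' t * 1)) (at t)"
      by (auto intro!: derivative_eq_intros)
    moreover have "\<bar>- Psi 1 * (Phi' t * 1)\<bar> \<le> 4"
      using Psi_ge0[of 1] Psi_le1[of 1] Phi'_ge0[of t] Phi'_le[of t]
      by (simp add: abs_mult) (metis mult_left_le_one_le order_trans)
    ultimately show ?thesis using 1 pi4 e by (intro exI[of _ "- Psi 1 * (Phi' t * 1)"]) auto
  next
    case 2
    have e: "(\<lambda>t. varphi (z(j:=t)) l) = (\<lambda>t. - Psi 1 * Phi (z 1))" using 2 by (auto simp: varphi_def)
    show ?thesis using e by (intro exI[of _ 0]) auto
  next
    case 3
    define a where "a = z (l - 1)"
    have e: "(\<lambda>t. varphi (z(j:=t)) l) = (\<lambda>t. Psi (- a) * Phi (- t) - Psi a * Phi t)"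
      using 3 by (auto simp: varphi_def a_def intro!: ext)
    have "((\<lambda>t. Psi (- a) * Phi (- t) - Psi a * Phi t) has_real_derivative
             Psi (- a) * (Phi' (- t) * (-1)) - Psi a * (Phi' t * 1)) (at t)"
      by (auto intro!: derivative_eq_intros)
    moreover have "\<bar>Psi (- a) * (Phi' (- t) * (-1)) - Psi a * (Phi' t * 1)\<bar> \<le> 4"
      using bnd1[of "Psi (-a)" "Psi a" "Phi' (-t)" 4 "Phi' t"] Psi_ge0 Psi_pm[of a] Phi'_ge0 Phi'_le
      by simp
    ultimately show ?thesis using 3 pi4 e by (intro exI) auto
  next
    case 4
    define b where "b = z l"
    have e: "(\<lambda>t. varphi (z(j:=t)) l) = (\<lambda>t. Psi (- t) * Phi (- b) - Psi t * Phi b)"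
      using 4 by (auto simp: varphi_def b_def intro!: ext)
    have "((\<lambda>t. Psi (- t) * Phi (- b) - Psi t * Phi b) has_real_derivative
             Psi' (- t) * (-1) * Phi (- b) - Psi' t * 1 * Phi b) (at t)"
      by (auto intro!: derivative_eq_intros)
    moreover have "\<bar>Psi' (- t) * (-1) * Phi (- b) - Psi' t * 1 * Phi b\<bar> \<le> 4 * pi"
      using bnd1[of "Psi' (-t)" "Psi' t" "Phi (-b)" "4*pi" "Phi b"] Psi'_ge0 Psi'_pm[of t] Phi_ge0 Phi_le
      by (simp add: algebra_simps)
    ultimately show ?thesis using 4 e by (intro exI) auto
  next
    case 5
    have e: "(\<lambda>t. varphi (z(j:=t)) l) = (\<lambda>t. varphi z l)"
      using 5 by (auto simp: varphi_def)
    show ?thesis using e by (intro exI[of _ 0]) auto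
  qed
qed



lemma sum_delta_bound:
  fixes c :: real
  assumes "finite L" "0 \<le> c" "\<And>l. l \<in> L \<Longrightarrow> P l \<Longrightarrow> l = q"
  shows "(\<Sum>l\<in>L. if P l then c else 0) \<le> c"
proof -
  have "(\<Sum>l\<in>L. if P l then c else 0) \<le> (\<Sum>l\<in>L. if l = q then c else 0)"
    using assms by (intro sum_mono) auto
  also have "\<dots> = (if q \<in> L then c else 0)" using assms(1) by (simp add: sum.delta')
  also have "\<dots> \<le> c" using assms(2) by simp
  finally show ?thesis .
qed

lemma varphi_sum_slice:
  fixes F :: "nat \<Rightarrow> nat" and n :: nat
  assumes F1: "\<And>l. 1 \<le> l \<Longrightarrow> 1 \<le> F l" and Fq: "\<And>l. 1 \<le> l \<Longrightarrow> F l = j \<or> F l = j + 1 \<Longrightarrow> l = q"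
  shows "\<exists>D. ((\<lambda>t. \<Sum>l=1..n. varphi (z(j:=t)) (F l)) has_real_derivative D) (at t) \<and> \<bar>D\<bar> \<le> 4 * pi"
proof -
  have "\<forall>l. \<exists>D. l \<in> {1..n} \<longrightarrow> ((\<lambda>t. varphi (z(j:=t)) (F l)) has_real_derivative D) (at t) \<and>
             \<bar>D\<bar> \<le> (if F l = j \<or> F l = j + 1 then 4 * pi else 0)"
    using varphi_slice F1 by (metis atLeastAtMost_iff)
  then obtain Df where Df: "\<And>l. l \<in> {1..n} \<Longrightarrow> ((\<lambda>t. varphi (z(j:=t)) (F l)) has_real_derivative Df l) (at t)"
    "\<And>l. l \<in> {1..n} \<Longrightarrow> \<bar>Df l\<bar> \<le> (if F l = j \<or> F l = j + 1 then 4 * pi else 0)"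
    by metis
  have "((\<lambda>t. \<Sum>l=1..n. varphi (z(j:=t)) (F l)) has_real_derivative (\<Sum>l=1..n. Df l)) (at t)"
    by (rule DERIV_sum) (rule Df(1))
  moreover have "\<bar>\<Sum>l=1..n. Df l\<bar> \<le> 4 * pi"
  proof -
    have "\<bar>\<Sum>l=1..n. Df l\<bar> \<le> (\<Sum>l=1..n. \<bar>Df l\<bar>)" by (rule sum_abs)
    also have "\<dots> \<le> (\<Sum>l=1..n. if F l = j \<or> F l = j + 1 then 4 * pi else 0)"
      by (intro sum_mono Df(2)) auto
    also have "\<dots> \<le> 4 * pi" by (rule sum_delta_bound) (use Fq pi_gt_zero in auto)
    finally show ?thesis .
  qed
  ultimately show ?thesis by blast
qed

lemma hfun_slice:
  "\<exists>D. ((\<lambda>t. hfun m dbar i (z(j:=t))) has_real_derivative D) (at t) \<and> \<bar>D\<bar> \<le> 4 + 12 * pi"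
proof -
  obtain D1 where D1: "((\<lambda>t. varphi (z(j:=t)) 1) has_real_derivative D1) (at t)" "\<bar>D1\<bar> \<le> 4 * pi"
    using varphi_slice[of 1 z j t] by (auto split: if_splits)
  obtain D2 where D2: "((\<lambda>t. \<Sum>l=1..dbar div 2. varphi (z(j:=t)) (2 * l)) has_real_derivative D2) (at t)"
      "\<bar>D2\<bar> \<le> 4 * pi"
    using varphi_sum_slice[where F="\<lambda>l. 2 * l" and j=j and q="(j + 1) div 2" and n="dbar div 2" and z=z and t=t] by fastforce
  obtain D3 where D3: "((\<lambda>t. \<Sum>l=1..dbar div 2. varphi (z(j:=t)) (2 * l + 1)) has_real_derivative D3) (at t)"
      "\<bar>D3\<bar> \<le> 4 * pi"
    using varphi_sum_slice[where F="\<lambda>l. 2 * l + 1" and j=j and q="j div 2" and n="dbar div 2" and z=z and t=t] by fastforce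
  have D1': "\<bar>D1\<bar> \<le> 4"
  proof (cases "j = 1")
    case True
    then have "(\<lambda>t. varphi (z(j:=t)) 1) = (\<lambda>t. - Psi 1 * Phi t)" by (auto simp: varphi_def)
    moreover have "((\<lambda>t. - Psi 1 * Phi t) has_real_derivative - Psi 1 * (Phi' t * 1)) (at t)"
      by (auto intro!: derivative_eq_intros)
    ultimately have "D1 = - Psi 1 * (Phi' t * 1)" using D1(1) DERIV_unique by metis
    moreover have "\<bar>- Psi 1 * (Phi' t * 1)\<bar> \<le> 4"
      using Psi_ge0[of 1] Psi_le1[of 1] Phi'_ge0[of t] Phi'_le[of t]
      by (simp add: abs_mult) (metis mult_left_le_one_le order_trans)
    ultimately show ?thesis by simp
  next
    case False
    then have "(\<lambda>t. varphi (z(j:=t)) 1) = (\<lambda>t. varphi z 1)" by (auto simp: varphi_def)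
    then have "D1 = 0" using D1(1) DERIV_unique DERIV_const by metis
    then show ?thesis by simp
  qed
  have pi0: "0 \<le> pi" by (simp add: pi_ge_zero)
  consider "1 \<le> i \<and> i \<le> m div 3" | "\<not> (1 \<le> i \<and> i \<le> m div 3)" "m div 3 + 1 \<le> i \<and> i \<le> 2 * m div 3"
    | "\<not> (1 \<le> i \<and> i \<le> m div 3)" "\<not> (m div 3 + 1 \<le> i \<and> i \<le> 2 * m div 3)" by blast
  then show ?thesis
  proof cases
    case 1
    then have "(\<lambda>t. hfun m dbar i (z(j:=t))) = (\<lambda>t. varphi (z(j:=t)) 1 + 3 * (\<Sum>l=1..dbar div 2. varphi (z(j:=t)) (2 * l)))"
      by (simp add: hfun_def)
    moreover have "((\<lambda>t. varphi (z(j:=t)) 1 + 3 * (\<Sum>l=1..dbar div 2. varphi (z(j:=t)) (2 * l))) has_real_derivative D1 + 3 * D2) (at t)"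
      by (intro DERIV_add DERIV_cmult D1 D2)
    moreover have "\<bar>D1 + 3 * D2\<bar> \<le> 4 + 12 * pi" using D1' D2(2) by linarith
    ultimately show ?thesis by metis
  next
    case 2
    then have "(\<lambda>t. hfun m dbar i (z(j:=t))) = (\<lambda>t. varphi (z(j:=t)) 1)"
      by (simp add: hfun_def)
    moreover have "\<bar>D1\<bar> \<le> 4 + 12 * pi" using D1' pi0 by linarith
    ultimately show ?thesis using D1 by metis
  next
    case 3
    then have "(\<lambda>t. hfun m dbar i (z(j:=t))) = (\<lambda>t. varphi (z(j:=t)) 1 + 3 * (\<Sum>l=1..dbar div 2. varphi (z(j:=t)) (2 * l + 1)))"
      using 3 unfolding hfun_def by (intro ext) (simp only: if_False)
    moreover have "((\<lambda>t. varphi (z(j:=t)) 1 + 3 * (\<Sum>l=1..dbar div 2. varphi (z(j:=t)) (2 * l + 1))) has_real_derivative D1 + 3 * D3) (at t)"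
      by (intro DERIV_add DERIV_cmult D1 D3)
    moreover have "\<bar>D1 + 3 * D3\<bar> \<le> 4 + 12 * pi" using D1' D3(2) by linarith
    ultimately show ?thesis by metis
  qed
qed



lemma grad_f0P_bound:
  assumes i: "1 \<le> i" "i \<le> 3*m1*m2" and e0: "0 < \<epsilon>" and L0: "0 < Lf"
  shows "\<bar>grad (f0P \<epsilon> Lf m1 m2 dbar) x (i,j)\<bar> \<le> 2 * \<epsilon> / sqrt (real (3*m1*m2)) * (4 + 12 * pi)"
proof -
  define M where "M = 3*m1*m2"
  have M0: "0 < M" using i M_def by linarith
  define C1 where "C1 = 300 * pi * \<epsilon>^2 / (real M * Lf)"
  define a where "a = sqrt (real M) * Lf / (150 * pi * \<epsilon>)"
  define w where "w = (\<lambda>j'. sqrt (real M) * Lf * x (i, j') / (150 * pi * \<epsilon>))"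
  define S0 where "S0 = (\<Sum>i'\<in>{1..M} - {i}. ffun \<epsilon> Lf M dbar i' (\<lambda>j'. x (i', j')))"
  have e: "f0P \<epsilon> Lf m1 m2 dbar (x((i,j):=t)) = C1 * hfun M dbar i (w(j := a*t)) + S0" for t
  proof -
    have "f0P \<epsilon> Lf m1 m2 dbar (x((i,j):=t)) =
        ffun \<epsilon> Lf M dbar i (\<lambda>j'. (x((i,j):=t)) (i, j')) +
        (\<Sum>i'\<in>{1..M} - {i}. ffun \<epsilon> Lf M dbar i' (\<lambda>j'. (x((i,j):=t)) (i', j')))"
      unfolding f0P_def M_def[symmetric] using i M_def by (subst sum.remove[of _ i]) auto
    also have "(\<Sum>i'\<in>{1..M} - {i}. ffun \<epsilon> Lf M dbar i' (\<lambda>j'. (x((i,j):=t)) (i', j'))) = S0"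
      unfolding S0_def by (intro sum.cong) auto
    also have "(\<lambda>j'. sqrt (real M) * Lf * (x((i,j):=t)) (i, j') / (150 * pi * \<epsilon>)) = w(j := a*t)"
      by (auto simp: w_def a_def)
    then have "ffun \<epsilon> Lf M dbar i (\<lambda>j'. (x((i,j):=t)) (i, j')) = C1 * hfun M dbar i (w(j := a*t))"
      unfolding ffun_def C1_def by simp
    finally show ?thesis .
  qed
  obtain D where D: "((\<lambda>s. hfun M dbar i (w(j:=s))) has_real_derivative D) (at (a * x (i,j)))"
      "\<bar>D\<bar> \<le> 4 + 12 * pi"
    using hfun_slice by blast
  have "((\<lambda>t. hfun M dbar i (w(j:=a*t))) has_real_derivative D * a) (at (x (i,j)))"
  proof -
    have g: "((\<lambda>t. a * t) has_real_derivative a) (at (x (i,j)))"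
      using DERIV_cmult[OF DERIV_ident, of a] by simp
    show ?thesis using DERIV_chain2[where f="\<lambda>s. hfun M dbar i (w(j:=s))" and g="\<lambda>t. a * t", OF D(1) g] by simp
  qed
  then have "((\<lambda>t. C1 * hfun M dbar i (w(j:=a*t)) + S0) has_real_derivative C1 * (D * a) + 0) (at (x (i,j)))"
    by (intro DERIV_add DERIV_cmult DERIV_const)
  then have "grad (f0P \<epsilon> Lf m1 m2 dbar) x (i,j) = C1 * (D * a)"
    unfolding grad_def e by (simp add: DERIV_imp_deriv)
  moreover have "C1 * a = 2 * \<epsilon> / sqrt (real M)"
  proof -
    have s: "sqrt (real M) * sqrt (real M) = real M" by simp
    have "sqrt (real M) > 0" using M0 by simp
    then show ?thesis unfolding C1_def a_def using e0 L0 M0 pi_gt_zero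
      by (simp add: field_simps power2_eq_square)
  qed
  moreover have "C1 > 0" "a > 0" using e0 L0 M0 pi_gt_zero by (auto simp: C1_def a_def)
  ultimately have "\<bar>grad (f0P \<epsilon> Lf m1 m2 dbar) x (i,j)\<bar> = 2 * \<epsilon> / sqrt (real M) * \<bar>D\<bar>"
  proof -
    assume h: "grad (f0P \<epsilon> Lf m1 m2 dbar) x (i,j) = C1 * (D * a)" "C1 * a = 2 * \<epsilon> / sqrt (real M)" "C1 > 0" "a > 0"
    have "\<bar>C1 * (D * a)\<bar> = (C1 * a) * \<bar>D\<bar>" using h(3,4) by (simp add: abs_mult)
    then show ?thesis using h(1,2) by simp
  qed
  also have "\<dots> \<le> 2 * \<epsilon> / sqrt (real M) * (4 + 12 * pi)"
    using D(2) e0 by (intro mult_left_mono) auto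
  finally show ?thesis unfolding M_def .
qed



lemma Jmat_alt: "Jmat k i = (if i = k + 1 then 1 else 0) - (if i = k then 1 else 0)"
  by (simp add: Jmat_def)

lemma sum_Jmat_left:
  assumes "finite S"
  shows "(\<Sum>i\<in>S. Jmat k i * f i) = (if k + 1 \<in> S then f (k+1) else 0) - (if k \<in> S then f k else 0)"
proof -
  have "(\<Sum>i\<in>S. Jmat k i * f i) = (\<Sum>i\<in>S. (if i = k + 1 then f i else 0)) - (\<Sum>i\<in>S. (if i = k then f i else 0))"
    unfolding sum_subtractf[symmetric] by (intro sum.cong) (auto simp: Jmat_def)
  also have "\<dots> = (if k + 1 \<in> S then f (k+1) else 0) - (if k \<in> S then f k else 0)"
    using assms by (simp add: sum.delta')
  finally show ?thesis .
qed

lemma sum_Jmat_right: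
  assumes "finite K"
  shows "(\<Sum>k\<in>K. Jmat k i * f k) = (if 1 \<le> i \<and> i - 1 \<in> K then f (i-1) else 0) - (if i \<in> K then f i else 0)"
proof -
  have e: "(if i = k + 1 then 1 else 0) = (if 1 \<le> i \<and> k = i - 1 then 1 else (0::real))" for k by auto
  have "(\<Sum>k\<in>K. Jmat k i * f k) = (\<Sum>k\<in>K. (if 1 \<le> i \<and> k = i - 1 then f k else 0)) - (\<Sum>k\<in>K. (if k = i then f k else 0))"
    unfolding sum_subtractf[symmetric] by (intro sum.cong) (auto simp: Jmat_def)
  also have "(\<Sum>k\<in>K. (if 1 \<le> i \<and> k = i - 1 then f k else 0)) = (if 1 \<le> i \<and> i - 1 \<in> K then f (i-1) else 0)"
    using assms by (cases "1 \<le> i") (simp_all add: sum.delta')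
  also have "(\<Sum>k\<in>K. (if k = i then f k else 0)) = (if i \<in> K then f i else 0)"
    using assms by (simp add: sum.delta')
  finally show ?thesis .
qed

lemma sum_prod_delta:
  fixes F :: "'a \<Rightarrow> real"
  assumes "finite S" "finite T" "j \<in> T"
  shows "(\<Sum>r\<in>S\<times>T. F (fst r) * (if snd r = j then 1 else 0) * g r) = (\<Sum>i\<in>S. F i * g (i,j))"
proof -
  have "(\<Sum>r\<in>S\<times>T. F (fst r) * (if snd r = j then 1 else 0) * g r)
      = (\<Sum>i\<in>S. \<Sum>j'\<in>T. F i * (if j' = j then 1 else 0) * g (i,j'))"
    by (simp add: sum.cartesian_product case_prod_beta)
  also have "\<dots> = (\<Sum>i\<in>S. F i * g (i,j))"
  proof (intro sum.cong refl)
    fix i assume "i \<in> S"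
    have "(\<Sum>j'\<in>T. F i * (if j' = j then 1 else 0) * g (i,j')) = (\<Sum>j'\<in>T. if j' = j then F i * g (i,j') else 0)"
      by (intro sum.cong) auto
    also have "\<dots> = F i * g (i,j)" using assms by (simp add: sum.delta')
    finally show "(\<Sum>j'\<in>T. F i * (if j' = j then 1 else 0) * g (i,j')) = F i * g (i,j)" .
  qed
  finally show ?thesis .
qed

lemma matvec_J:
  assumes "1 \<le> k0" "k0 < M" "j \<in> {1..dbar}"
  shows "matvec (coords M dbar) (JkronI c) x (k0, j) = c * (x (k0+1, j) - x (k0, j))"
proof -
  have "matvec (coords M dbar) (JkronI c) x (k0, j) =
      (\<Sum>s\<in>{1..M}\<times>{1..dbar}. (c * Jmat k0 (fst s)) * (if snd s = j then 1 else 0) * x s)"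
    unfolding matvec_def coords_def JkronI_def by (intro sum.cong refl) (auto simp: eq_commute[of j])
  also have "\<dots> = (\<Sum>i\<in>{1..M}. c * Jmat k0 i * x (i, j))"
    using assms by (subst sum_prod_delta) auto
  also have "\<dots> = c * (\<Sum>i\<in>{1..M}. Jmat k0 i * x (i, j))"
    by (simp add: sum_distrib_left mult.assoc)
  also have "\<dots> = c * (x (k0+1, j) - x (k0, j))"
    using assms by (subst sum_Jmat_left) auto
  finally show ?thesis .
qed

lemma tmatvec_J:
  assumes "finite K" "j \<in> {1..dbar}"
  shows "tmatvec (K \<times> {1..dbar}) (JkronI c) g (i, j) =
     c * ((if 1 \<le> i \<and> i - 1 \<in> K then g (i-1, j) else 0) - (if i \<in> K then g (i, j) else 0))"
proof -
  have "tmatvec (K \<times> {1..dbar}) (JkronI c) g (i, j) =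
      (\<Sum>r\<in>K\<times>{1..dbar}. (c * Jmat (fst r) i) * (if snd r = j then 1 else 0) * g r)"
    unfolding tmatvec_def JkronI_def by (intro sum.cong refl) auto
  also have "\<dots> = (\<Sum>k\<in>K. c * Jmat k i * g (k, j))"
    using assms by (subst sum_prod_delta[where F="\<lambda>k. c * Jmat k i"]) auto
  also have "\<dots> = c * (\<Sum>k\<in>K. Jmat k i * g (k, j))"
    by (simp add: sum_distrib_left mult.assoc)
  also have "\<dots> = c * ((if 1 \<le> i \<and> i - 1 \<in> K then g (i-1, j) else 0) - (if i \<in> K then g (i, j) else 0))"
    using assms by (subst sum_Jmat_right) auto
  finally show ?thesis .
qed



lemma Mset_eq: "Mset m1 m2 = (\<lambda>i. i * m1) ` {1..3*m2-1}"
  unfolding Mset_def by auto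

lemma finite_Mset: "finite (Mset m1 m2)" unfolding Mset_eq by simp

lemma Mset_dvd: "i \<in> Mset m1 m2 \<Longrightarrow> m1 dvd i" unfolding Mset_def by auto

lemma Mset_range:
  assumes "i \<in> Mset m1 m2" "2 \<le> m1"
  shows "1 \<le> i" "i + 1 \<le> 3*m1*m2" "i < 3*m1*m2"
proof -
  obtain c where c: "i = c * m1" "1 \<le> c" "c \<le> 3*m2 - 1" using assms(1) unfolding Mset_def by auto
  show "1 \<le> i" using c assms(2) by (metis le_trans mult_le_mono nat_mult_1 one_le_numeral)
  have "c + 1 \<le> 3*m2" using c by linarith
  then have "(c + 1) * m1 \<le> 3*m2*m1" by (rule mult_le_mono1)
  then show "i + 1 \<le> 3*m1*m2" using c assms(2) by (simp add: algebra_simps)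
  then show "i < 3*m1*m2" by simp
qed

lemma Mset_nb:
  assumes "i \<in> Mset m1 m2" "2 \<le> m1"
  shows "i + 1 \<notin> Mset m1 m2" "i - 1 \<notin> Mset m1 m2"
proof -
  have d: "m1 dvd i" using Mset_dvd assms by blast
  have i1: "1 \<le> i" using Mset_range assms by blast
  show "i + 1 \<notin> Mset m1 m2"
  proof
    assume "i + 1 \<in> Mset m1 m2"
    then have "m1 dvd i + 1" using Mset_dvd by blast
    then have "m1 dvd 1" using d by (metis dvd_add_right_iff)
    then show False using assms(2) by simp
  qed
  show "i - 1 \<notin> Mset m1 m2"
  proof
    assume "i - 1 \<in> Mset m1 m2"
    then have "m1 dvd i - 1" using Mset_dvd by blast
    then have "m1 dvd (i - 1) + 1" using d i1 by simp
    then have "m1 dvd 1" using \<open>m1 dvd i - 1\<close> by (metis dvd_add_right_iff)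
    then show False using assms(2) by simp
  qed
qed

definition Ld :: "(nat \<times> nat \<Rightarrow> real) \<Rightarrow> nat \<times> nat \<Rightarrow> real" where
  "Ld x p = x p - x (fst p + 1, snd p)"

lemma gP_P: "gP m1 m2 dbar \<beta> x = \<beta> * (\<Sum>p\<in>Mset m1 m2 \<times> {1..dbar}. \<bar>Ld x p\<bar>)"
  unfolding gP_def Ld_def by (simp add: sum.cartesian_product case_prod_beta)

lemma gP_same:
  assumes "\<And>p. p \<in> Mset m1 m2 \<times> {1..dbar} \<Longrightarrow> Ld y p = Ld x p"
  shows "gP m1 m2 dbar \<beta> y = gP m1 m2 dbar \<beta> x"
  unfolding gP_P using assms by (intro arg_cong[where f="\<lambda>s. \<beta> * s"] sum.cong) auto

lemma gP_change:
  assumes p0: "p0 \<in> Mset m1 m2 \<times> {1..dbar}"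
    and same: "\<And>p. p \<in> Mset m1 m2 \<times> {1..dbar} \<Longrightarrow> p \<noteq> p0 \<Longrightarrow> Ld y p = Ld x p"
  shows "gP m1 m2 dbar \<beta> y = gP m1 m2 dbar \<beta> x + \<beta> * (\<bar>Ld y p0\<bar> - \<bar>Ld x p0\<bar>)"
proof -
  let ?P = "Mset m1 m2 \<times> {1..dbar}"
  have f: "finite ?P" using finite_Mset by simp
  have "(\<Sum>p\<in>?P. \<bar>Ld y p\<bar>) = \<bar>Ld y p0\<bar> + (\<Sum>p\<in>?P - {p0}. \<bar>Ld y p\<bar>)"
    using f p0 by (rule sum.remove)
  also have "(\<Sum>p\<in>?P - {p0}. \<bar>Ld y p\<bar>) = (\<Sum>p\<in>?P - {p0}. \<bar>Ld x p\<bar>)"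
    using same by (intro sum.cong) auto
  also have "(\<Sum>p\<in>?P - {p0}. \<bar>Ld x p\<bar>) = (\<Sum>p\<in>?P. \<bar>Ld x p\<bar>) - \<bar>Ld x p0\<bar>"
    using sum.remove[OF f p0, of "\<lambda>p. \<bar>Ld x p\<bar>"] by simp
  finally have "(\<Sum>p\<in>?P. \<bar>Ld y p\<bar>) = (\<Sum>p\<in>?P. \<bar>Ld x p\<bar>) + (\<bar>Ld y p0\<bar> - \<bar>Ld x p0\<bar>)" by simp
  then show ?thesis unfolding gP_P by (simp add: distrib_left)
qed

lemma subdiff_test0:
  assumes v: "v \<in> subdiff I g x" and fin: "finite I"
    and same: "\<And>t. g (\<lambda>k. x k + t * w k) = g x"
  shows "(\<Sum>k\<in>I. v k * w k) = 0"
proof -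
  have "g (\<lambda>k. x k + t * w k) \<ge> g x + (\<Sum>k\<in>I. v k * ((x k + t * w k) - x k))" for t
    using v unfolding subdiff_def by (simp only: mem_Collect_eq)
  then have "g x \<ge> g x + t * (\<Sum>k\<in>I. v k * w k)" for t
    using same by (simp add: sum_distrib_left algebra_simps)
  from this[of 1] this[of "-1"] show ?thesis by simp
qed

lemma subdiff_test1:
  assumes v: "v \<in> subdiff I g x" and fin: "finite I" and b: "0 \<le> \<beta>" and d: "d \<noteq> 0"
    and ch: "\<And>t. g (\<lambda>k. x k + t * w k) = g x + \<beta> * (\<bar>d + t\<bar> - \<bar>d\<bar>)"
  shows "\<beta> \<le> \<bar>\<Sum>k\<in>I. v k * w k\<bar>"
proof -
  let ?S = "\<Sum>k\<in>I. v k * w k"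
  have "g (\<lambda>k. x k + t * w k) \<ge> g x + (\<Sum>k\<in>I. v k * ((x k + t * w k) - x k))" for t
    using v unfolding subdiff_def by (simp only: mem_Collect_eq)
  then have "g x + \<beta> * (\<bar>d + t\<bar> - \<bar>d\<bar>) \<ge> g x + t * ?S" for t
  proof -
    have "(\<Sum>k\<in>I. v k * ((x k + t * w k) - x k)) = t * ?S"
      by (simp add: sum_distrib_left algebra_simps)
    then show ?thesis using ch[of t] \<open>\<And>t. _ \<le> g (\<lambda>k. x k + t * w k)\<close>[of t] by linarith
  qed
  from this[of "-d"] have "d * ?S \<ge> \<beta> * \<bar>d\<bar>" by simp
  moreover have "d * ?S \<le> \<bar>d\<bar> * \<bar>?S\<bar>" by (metis abs_ge_self abs_mult)
  ultimately have "\<bar>d\<bar> * \<beta> \<le> \<bar>d\<bar> * \<bar>?S\<bar>" by (simp add: mult.commute)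
  then show ?thesis using d by simp
qed



lemma sgn_le_abs: "sgn a * b \<le> \<bar>b\<bar>" for a b :: real
  by (cases "a > 0"; cases "a < 0") (auto simp: sgn_real_def)

lemma sgn_self: "sgn a * a = \<bar>a\<bar>" for a :: real
  by (cases "a > 0"; cases "a < 0") (auto simp: sgn_real_def)

lemma subgrad_exists:
  assumes m1: "2 \<le> m1" and b: "0 \<le> \<beta>"
  shows "\<exists>v. v \<in> subdiff (coords (3*m1*m2) dbar) (gP m1 m2 dbar \<beta>) x"
proof -
  let ?P = "Mset m1 m2 \<times> {1..dbar}"
  let ?I = "coords (3*m1*m2) dbar"
  have finP: "finite ?P" using finite_Mset by simp
  have finI: "finite ?I" unfolding coords_def by simp
  define s where "s p = sgn (Ld x p)" for p
  define v where "v k = \<beta> * (\<Sum>p\<in>?P. s p * ((if k = p then 1 else 0) - (if k = (fst p + 1, snd p) then 1 else 0)))" for k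
  have PI: "p \<in> ?I" "(fst p + 1, snd p) \<in> ?I" if "p \<in> ?P" for p
    using that Mset_range[OF _ m1, of "fst p" m2] unfolding coords_def by auto
  have "v \<in> subdiff ?I (gP m1 m2 dbar \<beta>) x"
    unfolding subdiff_def mem_Collect_eq
  proof
    fix y
    define z where "z k = y k - x k" for k
    have "(\<Sum>k\<in>?I. v k * (y k - x k)) = \<beta> * (\<Sum>k\<in>?I. \<Sum>p\<in>?P. s p * (((if k = p then 1 else 0) - (if k = (fst p + 1, snd p) then 1 else 0)) * z k))"
      unfolding v_def z_def by (simp add: sum_distrib_left sum_distrib_right mult.assoc)
    also have "\<dots> = \<beta> * (\<Sum>p\<in>?P. s p * (\<Sum>k\<in>?I. ((if k = p then 1 else 0) - (if k = (fst p + 1, snd p) then 1 else 0)) * z k))"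
      by (subst sum.swap) (simp add: sum_distrib_left)
    also have "\<dots> = \<beta> * (\<Sum>p\<in>?P. s p * (\<Sum>k\<in>?I. ((if k = p then z k else 0) - (if k = (fst p + 1, snd p) then z k else 0))))"
      by (intro arg_cong[where f="\<lambda>u. \<beta> * u"] sum.cong refl arg_cong[where f="\<lambda>u. s _ * u"]) auto
    also have "\<dots> = \<beta> * (\<Sum>p\<in>?P. s p * (Ld y p - Ld x p))"
    proof -
      have "(\<Sum>k\<in>?I. ((if k = p then z k else 0) - (if k = (fst p + 1, snd p) then z k else 0))) = Ld y p - Ld x p"
        if "p \<in> ?P" for p
        using PI[OF that] finI by (simp add: sum_subtractf sum.delta' z_def Ld_def)
      then show ?thesis by (intro arg_cong[where f="\<lambda>u. \<beta> * u"] sum.cong) auto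
    qed
    also have "\<dots> \<le> \<beta> * (\<Sum>p\<in>?P. \<bar>Ld y p\<bar> - \<bar>Ld x p\<bar>)"
    proof (intro mult_left_mono b sum_mono)
      fix p
      show "s p * (Ld y p - Ld x p) \<le> \<bar>Ld y p\<bar> - \<bar>Ld x p\<bar>"
        using sgn_le_abs[of "Ld x p" "Ld y p"] sgn_self[of "Ld x p"] unfolding s_def
        by (simp add: right_diff_distrib)
    qed
    also have "\<dots> = gP m1 m2 dbar \<beta> y - gP m1 m2 dbar \<beta> x"
      unfolding gP_P by (simp add: sum_subtractf right_diff_distrib)
    finally show "gP m1 m2 dbar \<beta> x + (\<Sum>k\<in>?I. v k * (y k - x k)) \<le> gP m1 m2 dbar \<beta> y" by simp
  qed
  then show ?thesis by blast
qed

lemma opnorm_nonneg: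
  assumes fR: "finite R" and fC: "finite C"
  shows "0 \<le> opnorm R C M"
proof -
  let ?S = "{vnorm R (matvec C M x) | x. vnorm C x \<le> 1}"
  have z: "0 \<in> ?S"
    by (rule CollectI, rule exI[of _ "\<lambda>_. 0"]) (simp add: vnorm_def matvec_def)
  define B where "B = sqrt (\<Sum>r\<in>R. (\<Sum>c\<in>C. \<bar>M r c\<bar>)^2)"
  have "bdd_above ?S"
  proof (rule bdd_aboveI[of _ B])
    fix u assume "u \<in> ?S"
    then obtain x where u: "u = vnorm R (matvec C M x)" and x: "vnorm C x \<le> 1" by blast
    have xs: "(\<Sum>c\<in>C. (x c)^2) \<le> 1" using x unfolding vnorm_def
      by (metis real_sqrt_le_1_iff)
    have xc: "\<bar>x c\<bar> \<le> 1" if "c \<in> C" for c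
    proof -
      have "(x c)^2 \<le> (\<Sum>c\<in>C. (x c)^2)" using fC that by (intro member_le_sum) auto
      then have "(x c)^2 \<le> 1" using xs by linarith
      then show ?thesis by (simp add: abs_square_le_1)
    qed
    have "\<bar>matvec C M x r\<bar> \<le> (\<Sum>c\<in>C. \<bar>M r c\<bar>)" for r
    proof -
      have "\<bar>matvec C M x r\<bar> \<le> (\<Sum>c\<in>C. \<bar>M r c * x c\<bar>)" unfolding matvec_def by (rule sum_abs)
      also have "\<dots> \<le> (\<Sum>c\<in>C. \<bar>M r c\<bar>)"
        using xc by (intro sum_mono) (simp add: abs_mult mult_left_le)
      finally show ?thesis .
    qed
    then have "(matvec C M x r)^2 \<le> (\<Sum>c\<in>C. \<bar>M r c\<bar>)^2" for r
      by (metis abs_ge_zero power2_abs power_mono)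
    then have "(\<Sum>r\<in>R. (matvec C M x r)^2) \<le> (\<Sum>r\<in>R. (\<Sum>c\<in>C. \<bar>M r c\<bar>)^2)"
      by (intro sum_mono)
    then show "u \<le> B" unfolding u vnorm_def B_def by simp
  qed
  then show ?thesis unfolding opnorm_def using z by (meson cSup_upper)
qed

lemma cs_bound:
  fixes D :: "'a \<Rightarrow> real"
  assumes "finite I" "W \<subseteq> I"
  shows "\<bar>\<Sum>k\<in>W. D k\<bar> \<le> sqrt (real (card W)) * vnorm I D"
proof -
  have fW: "finite W" using assms finite_subset by blast
  have "(\<Sum>k\<in>W. 1 * D k)^2 \<le> (\<Sum>k\<in>W. 1^2) * (\<Sum>k\<in>W. (D k)^2)"
    by (rule Cauchy_Schwarz_ineq_sum)
  also have "(\<Sum>k\<in>W. (D k)^2) \<le> (\<Sum>k\<in>I. (D k)^2)"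
    using assms by (intro sum_mono2) auto
  then have "(\<Sum>k\<in>W. 1^2) * (\<Sum>k\<in>W. (D k)^2) \<le> real (card W) * (\<Sum>k\<in>I. (D k)^2)"
    by (simp add: mult_left_mono)
  finally have "(\<Sum>k\<in>W. D k)^2 \<le> real (card W) * (\<Sum>k\<in>I. (D k)^2)" by simp
  then have "sqrt ((\<Sum>k\<in>W. D k)^2) \<le> sqrt (real (card W) * (\<Sum>k\<in>I. (D k)^2))"
    by (rule real_sqrt_le_mono)
  then show ?thesis unfolding vnorm_def by (simp add: real_sqrt_mult)
qed



lemma sum_ind:
  fixes v :: "'a \<Rightarrow> real"
  assumes "finite I" "S \<subseteq> I"
  shows "(\<Sum>k\<in>I. v k * (if k \<in> S then 1 else 0)) = (\<Sum>k\<in>S. v k)"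
proof -
  have "(\<Sum>k\<in>I. v k * (if k \<in> S then 1 else 0)) = (\<Sum>k\<in>I. if k \<in> S then v k else 0)"
    by (intro sum.cong) auto
  also have "\<dots> = (\<Sum>k\<in>I \<inter> S. v k)" using assms(1) by (simp add: sum.inter_restrict)
  also have "I \<inter> S = S" using assms(2) by blast
  finally show ?thesis .
qed

lemma Ld_shift: "Ld (\<lambda>k. x k + t * w k) p = Ld x p + t * (w p - w (fst p + 1, snd p))"
  unfolding Ld_def by (simp add: algebra_simps)

lemma v_pair:
  assumes v: "v \<in> subdiff (coords (3*m1*m2) dbar) (gP m1 m2 dbar \<beta>) x"
    and i: "i \<in> Mset m1 m2" and j: "j \<in> {1..dbar}" and m1: "2 \<le> m1"
  shows "v (i,j) + v (i+1,j) = 0"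
proof -
  let ?I = "coords (3*m1*m2) dbar"
  define S where "S = {(i,j), (i+1,j)}"
  define w where "w k = (if k \<in> S then 1 else (0::real))" for k
  have finI: "finite ?I" unfolding coords_def by simp
  have SI: "S \<subseteq> ?I" using Mset_range[OF i m1] j unfolding S_def coords_def by auto
  have "(\<Sum>k\<in>?I. v k * w k) = 0"
  proof (rule subdiff_test0[OF v finI])
    fix t
    show "gP m1 m2 dbar \<beta> (\<lambda>k. x k + t * w k) = gP m1 m2 dbar \<beta> x"
    proof (rule gP_same)
      fix p assume p: "p \<in> Mset m1 m2 \<times> {1..dbar}"
      obtain i' j' where pp: "p = (i', j')" by fastforce
      have i': "i' \<in> Mset m1 m2" using p pp by auto
      have "w p = w (fst p + 1, snd p)"
        using i i' Mset_nb[OF i' m1] Mset_nb[OF i m1] Mset_range[OF i m1] unfolding w_def S_def pp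
        by (cases "i' = i"; cases "i' + 1 = i") auto
      then show "Ld (\<lambda>k. x k + t * w k) p = Ld x p" by (simp add: Ld_shift)
    qed
  qed
  moreover have "(\<Sum>k\<in>?I. v k * w k) = v (i,j) + v (i+1,j)"
    unfolding w_def using sum_ind[OF finI SI, of v] by (simp add: S_def)
  ultimately show ?thesis by simp
qed

lemma v_zero:
  assumes v: "v \<in> subdiff (coords (3*m1*m2) dbar) (gP m1 m2 dbar \<beta>) x"
    and k: "(i,j) \<in> coords (3*m1*m2) dbar" and n1: "i \<notin> Mset m1 m2" and n2: "i - 1 \<notin> Mset m1 m2"
  shows "v (i,j) = 0"
proof -
  let ?I = "coords (3*m1*m2) dbar"
  define S where "S = {(i,j)}"
  define w where "w k = (if k \<in> S then 1 else (0::real))" for k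
  have finI: "finite ?I" unfolding coords_def by simp
  have SI: "S \<subseteq> ?I" using k unfolding S_def by auto
  have "(\<Sum>k\<in>?I. v k * w k) = 0"
  proof (rule subdiff_test0[OF v finI])
    fix t
    show "gP m1 m2 dbar \<beta> (\<lambda>k. x k + t * w k) = gP m1 m2 dbar \<beta> x"
    proof (rule gP_same)
      fix p assume p: "p \<in> Mset m1 m2 \<times> {1..dbar}"
      obtain i' j' where pp: "p = (i', j')" by fastforce
      have i': "i' \<in> Mset m1 m2" using p pp by auto
      have "w p = 0" "w (fst p + 1, snd p) = 0"
        using i' n1 n2 unfolding w_def S_def pp by auto
      then show "Ld (\<lambda>k. x k + t * w k) p = Ld x p" by (simp add: Ld_shift)
    qed
  qed
  moreover have "(\<Sum>k\<in>?I. v k * w k) = v (i,j)"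
    unfolding w_def using sum_ind[OF finI SI, of v] by (simp add: S_def)
  ultimately show ?thesis by simp
qed



lemma vnorm_nonneg: "0 \<le> vnorm I v"
  unfolding vnorm_def by (simp add: sum_nonneg)

lemma arith_helper:
  fixes b a d k q p :: real
  assumes "b \<le> a + d + k" "a \<le> q" "3 * q < p" "0 < q" "d = b - (50 * p + q)" "k = 8 * q + 24 * p"
  shows False
  using assms by linarith

theorem lemma4:
  fixes \<epsilon> Lf \<beta> \<epsilon>h :: real and m1 m2 dbar :: nat and x :: "nat \<times> nat \<Rightarrow> real"
  assumes eps: "0 < \<epsilon>" "\<epsilon> < 1"
    and Lf: "0 < Lf"
    and m1: "2 \<le> m1" and m2: "1 \<le> m2" and ev: "even (m1 * m2)"
    and dbar: "odd dbar" "5 \<le> dbar"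
    and beta: "\<beta> > (50 * pi + 1 + opnorm (Arows m1 m2 dbar) (coords (3 * m1 * m2) dbar) (Amat m1 m2 Lf))
                     * sqrt (real (3 * m1 * m2)) * \<epsilon>"
    and eh: "0 \<le> \<epsilon>h" "\<epsilon>h \<le> \<epsilon>"
    and stat: "eps_stat_P (coords (3 * m1 * m2) dbar) (Arows m1 m2 dbar) (f0P \<epsilon> Lf m1 m2 dbar)
                 (gP m1 m2 dbar \<beta>) (Amat m1 m2 Lf) (\<lambda>_. 0) \<epsilon>h x"
  shows "eps_stat_AP (coords (3 * m1 * m2) dbar) (Hrows m1 m2 dbar) (f0P \<epsilon> Lf m1 m2 dbar)
           (Hmat m1 m2 Lf) \<epsilon>h x"
proof -
  define M where "M = 3 * m1 * m2"
  let ?I = "coords M dbar"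
  let ?R = "Arows m1 m2 dbar"
  let ?Mr = "Mset m1 m2 \<times> {1..dbar}"
  let ?f = "f0P \<epsilon> Lf m1 m2 dbar"
  let ?g = "gP m1 m2 dbar \<beta>"
  have M0: "0 < M" unfolding M_def using m1 m2 by simp
  have finI: "finite ?I" unfolding coords_def by simp
  have finR: "finite ?R" unfolding Arows_def MCset_def by simp
  have opn: "0 \<le> opnorm ?R ?I (Amat m1 m2 Lf)" by (rule opnorm_nonneg[OF finR finI])
  define sM where "sM = sqrt (real M)"
  have sM0: "0 < sM" unfolding sM_def using M0 by simp
  have sMsq: "sM * sM = real M" unfolding sM_def by simp
  have bgt: "\<beta> > (50 * pi + 1) * sM * \<epsilon>"
  proof -
    have "(50 * pi + 1) * sM * \<epsilon> \<le> (50 * pi + 1 + opnorm ?R ?I (Amat m1 m2 Lf)) * sM * \<epsilon>"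
      using opn sM0 eps by (intro mult_right_mono) auto
    then show ?thesis using beta unfolding M_def sM_def by linarith
  qed
  have b0: "0 \<le> \<beta>"
  proof -
    have "0 \<le> (50 * pi + 1) * sM * \<epsilon>" using sM0 eps pi_gt_zero by simp
    then show ?thesis using bgt by linarith
  qed
  define c where "c = real M * Lf"
  have c0: "0 < c" unfolding c_def using M0 Lf by simp
  have AJ: "Amat m1 m2 Lf = JkronI c" unfolding Amat_def c_def M_def by simp
  have HJ: "Hmat m1 m2 Lf = JkronI c" unfolding Hmat_def c_def M_def by simp
  define K where "K = 2 * \<epsilon> / sM * (4 + 12 * pi)"
  have gb: "\<bar>grad ?f x k\<bar> \<le> K" if "k \<in> ?I" for k
  proof -
    obtain i j where k: "k = (i, j)" by fastforce
    have "1 \<le> i" "i \<le> 3*m1*m2" using that k unfolding coords_def M_def by auto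
    then show ?thesis unfolding k K_def sM_def M_def by (rule grad_f0P_bound[OF _ _ eps(1) Lf])
  qed
  have MK: "real M * K = (8 + 24 * pi) * (sM * \<epsilon>)"
  proof -
    have "real M * K = (sM * sM) * (2 * \<epsilon> / sM * (4 + 12 * pi))" unfolding K_def sMsq ..
    also have "\<dots> = (8 + 24 * pi) * (sM * \<epsilon>)" using sM0 by (simp add: field_simps)
    finally show ?thesis .
  qed
  from stat obtain \<gamma> where
    dist: "dist0 ?I {(\<lambda>k. grad ?f x k + tmatvec ?R (Amat m1 m2 Lf) \<gamma> k + v k) | v. v \<in> subdiff ?I ?g x} \<le> \<epsilon>h"
    and ax: "vnorm ?R (\<lambda>r. matvec ?I (Amat m1 m2 Lf) x r + 0) \<le> \<epsilon>h"
    unfolding eps_stat_P_def M_def by auto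
  define Dv where "Dv v = (\<lambda>k. grad ?f x k + tmatvec ?R (Amat m1 m2 Lf) \<gamma> k + v k)" for v
  have approx: "\<exists>v. v \<in> subdiff ?I ?g x \<and> vnorm ?I (Dv v) < \<epsilon>h + \<delta>" if d0: "0 < \<delta>" for \<delta>
  proof (rule ccontr)
    assume na: "\<not> ?thesis"
    obtain v0 where v0: "v0 \<in> subdiff ?I ?g x" using subgrad_exists[OF m1 b0] unfolding M_def by blast
    let ?S = "vnorm ?I ` {(\<lambda>k. grad ?f x k + tmatvec ?R (Amat m1 m2 Lf) \<gamma> k + v k) | v. v \<in> subdiff ?I ?g x}"
    have "?S \<noteq> {}" using v0 by blast
    moreover have "\<epsilon>h + \<delta> \<le> y" if "y \<in> ?S" for y
      using that na unfolding Dv_def by force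
    ultimately have "\<epsilon>h + \<delta> \<le> Inf ?S" by (rule cInf_greatest)
    then show False using dist d0 unfolding dist0_def by linarith
  qed
  have nojump: "x (i, j) = x (i + 1, j)" if i: "i \<in> Mset m1 m2" and j: "j \<in> {1..dbar}" for i j
  proof (rule ccontr)
    assume ne: "x (i, j) \<noteq> x (i + 1, j)"
    define d where "d = x (i, j) - x (i + 1, j)"
    have d0: "d \<noteq> 0" using ne unfolding d_def by simp
    have iR: "1 \<le> i" "i + 1 \<le> M" using Mset_range[OF i m1] unfolding M_def by auto
    define \<delta> where "\<delta> = (\<beta> - (50 * pi + 1) * sM * \<epsilon>) / sM"
    have \<delta>0: "0 < \<delta>" unfolding \<delta>_def using bgt sM0 by simp
    have sd: "sM * \<delta> = \<beta> - (50 * pi + 1) * sM * \<epsilon>" unfolding \<delta>_def using sM0 by simp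
    obtain v where v: "v \<in> subdiff ?I ?g x" and vn: "vnorm ?I (Dv v) < \<epsilon>h + \<delta>"
      using approx[OF \<delta>0] by blast
    define W where "W = (\<lambda>i'. (i', j)) ` {1..i}"
    define w where "w k = (if k \<in> W then 1 else (0::real))" for k
    have WI: "W \<subseteq> ?I" using iR j unfolding W_def coords_def by auto
    have cW: "card W = i" unfolding W_def by (subst card_image) (auto simp: inj_on_def)
    have ch: "?g (\<lambda>k. x k + t * w k) = ?g x + \<beta> * (\<bar>d + t\<bar> - \<bar>d\<bar>)" for t
    proof -
      have "?g (\<lambda>k. x k + t * w k) = ?g x + \<beta> * (\<bar>Ld (\<lambda>k. x k + t * w k) (i, j)\<bar> - \<bar>Ld x (i, j)\<bar>)"
      proof (rule gP_change)
        show "(i, j) \<in> ?Mr" using i j by simp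
        fix p assume p: "p \<in> ?Mr" "p \<noteq> (i, j)"
        obtain i' j' where pp: "p = (i', j')" by fastforce
        have i': "i' \<in> Mset m1 m2" "j' \<in> {1..dbar}" using p pp by auto
        have "1 \<le> i'" using Mset_range[OF i'(1) m1] by simp
        then have "w p = w (fst p + 1, snd p)"
          using p(2) unfolding w_def W_def pp by auto
        then show "Ld (\<lambda>k. x k + t * w k) p = Ld x p" by (simp add: Ld_shift)
      qed
      moreover have "w (i, j) = 1" "w (i + 1, j) = 0" using iR unfolding w_def W_def by auto
      ultimately show ?thesis by (simp add: Ld_shift Ld_def d_def)
    qed
    have lb: "\<beta> \<le> \<bar>\<Sum>k\<in>?I. v k * w k\<bar>"
      by (rule subdiff_test1[OF v finI b0 d0]) (rule ch)
    have sw: "(\<Sum>k\<in>?I. v k * w k) = (\<Sum>k\<in>W. v k)"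
      unfolding w_def by (rule sum_ind[OF finI WI])
    have AT0: "(\<Sum>k\<in>W. tmatvec ?R (Amat m1 m2 Lf) \<gamma> k) = 0"
    proof -
      have "(\<Sum>k\<in>W. tmatvec ?R (Amat m1 m2 Lf) \<gamma> k) = (\<Sum>r\<in>?R. \<Sum>k\<in>W. JkronI c r k * \<gamma> r)"
        unfolding tmatvec_def AJ by (rule sum.swap)
      also have "\<dots> = 0"
      proof (rule sum.neutral, rule ballI)
        fix r assume r: "r \<in> ?R"
        obtain k0 j' where rr: "r = (k0, j')" by fastforce
        have k0: "1 \<le> k0" "k0 \<noteq> i" using r i unfolding rr Arows_def MCset_def by auto
        have "(\<Sum>k\<in>W. JkronI c r k * \<gamma> r) = (\<Sum>i'\<in>{1..i}. JkronI c r (i', j) * \<gamma> r)"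
          unfolding W_def by (subst sum.reindex) (auto simp: inj_on_def)
        also have "\<dots> = (\<Sum>i'\<in>{1..i}. (c * (if j' = j then 1 else 0) * \<gamma> r) * (Jmat k0 i' * 1))"
          unfolding JkronI_def rr by (intro sum.cong) auto
        also have "\<dots> = (c * (if j' = j then 1 else 0) * \<gamma> r) * (\<Sum>i'\<in>{1..i}. Jmat k0 i' * 1)"
          by (simp add: sum_distrib_left)
        also have "(\<Sum>i'\<in>{1..i}. Jmat k0 i' * 1) = 0"
          using k0 by (subst sum_Jmat_left) auto
        finally show "(\<Sum>k\<in>W. JkronI c r k * \<gamma> r) = 0" by simp
      qed
      finally show ?thesis .
    qed
    have vs: "(\<Sum>k\<in>W. v k) = (\<Sum>k\<in>W. Dv v k) - (\<Sum>k\<in>W. grad ?f x k) - (\<Sum>k\<in>W. tmatvec ?R (Amat m1 m2 Lf) \<gamma> k)"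
      unfolding Dv_def by (simp add: sum.distrib)
    have t1: "\<bar>\<Sum>k\<in>W. Dv v k\<bar> \<le> sM * (\<epsilon>h + \<delta>)"
    proof -
      have "\<bar>\<Sum>k\<in>W. Dv v k\<bar> \<le> sqrt (real (card W)) * vnorm ?I (Dv v)" by (rule cs_bound[OF finI WI])
      also have "\<dots> \<le> sM * (\<epsilon>h + \<delta>)"
        using cW iR vn vnorm_nonneg[of ?I "Dv v"] unfolding sM_def
        by (intro mult_mono) auto
      finally show ?thesis .
    qed
    have t2: "\<bar>\<Sum>k\<in>W. grad ?f x k\<bar> \<le> real M * K"
    proof -
      have "\<bar>\<Sum>k\<in>W. grad ?f x k\<bar> \<le> (\<Sum>k\<in>W. \<bar>grad ?f x k\<bar>)" by (rule sum_abs)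
      also have "\<dots> \<le> (\<Sum>k\<in>W. K)" using gb WI by (intro sum_mono) auto
      also have "\<dots> = real i * K" using cW by simp
      also have "\<dots> \<le> real M * K"
      proof -
        have "0 \<le> K" unfolding K_def using eps sM0 pi_gt_zero
          by (intro mult_nonneg_nonneg divide_nonneg_nonneg) auto
        then show ?thesis using iR by (intro mult_right_mono) auto
      qed
      finally show ?thesis .
    qed
    have "\<beta> \<le> sM * (\<epsilon>h + \<delta>) + real M * K"
      using lb sw vs AT0 t1 t2 by linarith
    moreover have "sM * \<epsilon>h \<le> sM * \<epsilon>" using eh sM0 by simp
    moreover have "pi * (sM * \<epsilon>) > 3 * (sM * \<epsilon>)"
      using pi_gt3 sM0 eps by (intro mult_strict_right_mono) auto
    moreover have "(8 + 24 * pi) * (sM * \<epsilon>) = 8 * (sM * \<epsilon>) + 24 * (pi * (sM * \<epsilon>))"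
      "(50 * pi + 1) * sM * \<epsilon> = 50 * (pi * (sM * \<epsilon>)) + sM * \<epsilon>"
      "sM * (\<epsilon>h + \<delta>) = sM * \<epsilon>h + sM * \<delta>" by (simp_all add: algebra_simps)
    moreover have "0 < sM * \<epsilon>" using sM0 eps by simp
    ultimately show False using sd MK
      using arith_helper[of \<beta> "sM * \<epsilon>h" "sM * \<delta>" "real M * K" "sM * \<epsilon>" "pi * (sM * \<epsilon>)"]
      by (simp only: mult.assoc)
  qed
  have MrR: "Hrows m1 m2 dbar = ?R \<union> ?Mr" "?R \<inter> ?Mr = {}"
  proof -
    have "Mset m1 m2 \<subseteq> {1..3 * m1 * m2 - 1}"
    proof
      fix a assume a: "a \<in> Mset m1 m2"
      show "a \<in> {1..3 * m1 * m2 - 1}" using Mset_range[OF a m1] by auto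
    qed
    then show "Hrows m1 m2 dbar = ?R \<union> ?Mr" "?R \<inter> ?Mr = {}"
      unfolding Hrows_def Arows_def MCset_def by auto
  qed
  have finMr: "finite ?Mr" using finite_Mset by simp
  have hx: "vnorm (Hrows m1 m2 dbar) (matvec ?I (Hmat m1 m2 Lf) x) \<le> \<epsilon>h"
  proof -
    have "(\<Sum>r\<in>Hrows m1 m2 dbar. (matvec ?I (Hmat m1 m2 Lf) x r)^2)
        = (\<Sum>r\<in>?R. (matvec ?I (Hmat m1 m2 Lf) x r)^2) + (\<Sum>r\<in>?Mr. (matvec ?I (Hmat m1 m2 Lf) x r)^2)"
      unfolding MrR(1) by (rule sum.union_disjoint[OF finR finMr MrR(2)])
    also have "(\<Sum>r\<in>?Mr. (matvec ?I (Hmat m1 m2 Lf) x r)^2) = 0"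
    proof (intro sum.neutral ballI)
      fix r assume r: "r \<in> ?Mr"
      obtain k0 j where rr: "r = (k0, j)" by fastforce
      have k0: "k0 \<in> Mset m1 m2" "j \<in> {1..dbar}" using r rr by auto
      have "matvec ?I (Hmat m1 m2 Lf) x r = c * (x (k0+1, j) - x (k0, j))"
        unfolding HJ rr using Mset_range[OF k0(1) m1] k0(2) unfolding M_def by (intro matvec_J) auto
      then show "(matvec ?I (Hmat m1 m2 Lf) x r)^2 = 0" using nojump[OF k0] by simp
    qed
    finally have "vnorm (Hrows m1 m2 dbar) (matvec ?I (Hmat m1 m2 Lf) x) = vnorm ?R (\<lambda>r. matvec ?I (Amat m1 m2 Lf) x r + 0)"
      unfolding vnorm_def AJ HJ by simp
    then show ?thesis using ax by simp
  qed
  let ?T = "{vnorm ?I (\<lambda>k. grad ?f x k + tmatvec (Hrows m1 m2 dbar) (Hmat m1 m2 Lf) \<gamma>' k) | \<gamma>'. True}"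
  have bddT: "bdd_below ?T" by (rule bdd_belowI[of _ 0]) (auto simp: vnorm_nonneg)
  have infT: "Inf ?T \<le> \<epsilon>h"
  proof (rule field_le_epsilon)
    fix \<delta> :: real assume d0: "0 < \<delta>"
    obtain v where v: "v \<in> subdiff ?I ?g x" and vn: "vnorm ?I (Dv v) < \<epsilon>h + \<delta>"
      using approx[OF d0] by blast
    define \<gamma>' where "\<gamma>' r = (if r \<in> ?R then \<gamma> r else - v r / c)" for r
    have eq: "tmatvec (Hrows m1 m2 dbar) (Hmat m1 m2 Lf) \<gamma>' k = tmatvec ?R (Amat m1 m2 Lf) \<gamma> k + v k"
      if k: "k \<in> ?I" for k
    proof -
      obtain i j where kk: "k = (i, j)" by fastforce
      have ij: "1 \<le> i" "i \<le> M" "j \<in> {1..dbar}" using k kk unfolding coords_def by auto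
      have "tmatvec (Hrows m1 m2 dbar) (Hmat m1 m2 Lf) \<gamma>' k =
          tmatvec ?R (Hmat m1 m2 Lf) \<gamma>' k + tmatvec ?Mr (Hmat m1 m2 Lf) \<gamma>' k"
        unfolding tmatvec_def MrR(1) by (rule sum.union_disjoint[OF finR finMr MrR(2)])
      also have "tmatvec ?R (Hmat m1 m2 Lf) \<gamma>' k = tmatvec ?R (Amat m1 m2 Lf) \<gamma> k"
        unfolding tmatvec_def AJ HJ \<gamma>'_def by (intro sum.cong) auto
      also have "tmatvec ?Mr (Hmat m1 m2 Lf) \<gamma>' k = tmatvec ?Mr (JkronI c) (\<lambda>r. - v r / c) k"
        unfolding tmatvec_def HJ \<gamma>'_def using MrR(2) by (intro sum.cong) auto
      also have "\<dots> = c * ((if 1 \<le> i \<and> i - 1 \<in> Mset m1 m2 then - v (i-1, j) / c else 0)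
                         - (if i \<in> Mset m1 m2 then - v (i, j) / c else 0))"
        unfolding kk using finite_Mset ij(3) by (rule tmatvec_J)
      also have "\<dots> = v k"
      proof -
        consider "i \<in> Mset m1 m2" | "i \<notin> Mset m1 m2" "i - 1 \<in> Mset m1 m2" | "i \<notin> Mset m1 m2" "i - 1 \<notin> Mset m1 m2"
          by blast
        then show ?thesis
        proof cases
          case 1
          then have "i - 1 \<notin> Mset m1 m2" using Mset_nb[OF _ m1] by blast
          then show ?thesis using 1 c0 kk by simp
        next
          case 2
          have "v (i - 1, j) + v (i - 1 + 1, j) = 0"
            using v_pair[OF v[unfolded M_def] 2(2) ij(3) m1] .
          then have "v (i, j) = - v (i - 1, j)" using ij(1) by simp
          then show ?thesis using 2 c0 kk ij(1) by simp
        next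
          case 3
          have "v (i, j) = 0" using v_zero[OF v[unfolded M_def] _ 3] k kk unfolding M_def by simp
          then show ?thesis using 3 kk by simp
        qed
      qed
      finally show ?thesis by simp
    qed
    have veq: "vnorm ?I (\<lambda>k. grad ?f x k + tmatvec (Hrows m1 m2 dbar) (Hmat m1 m2 Lf) \<gamma>' k) = vnorm ?I (Dv v)"
      unfolding vnorm_def Dv_def using eq by (intro arg_cong[where f=sqrt] sum.cong) (auto simp: add.assoc)
    have mem: "vnorm ?I (\<lambda>k. grad ?f x k + tmatvec (Hrows m1 m2 dbar) (Hmat m1 m2 Lf) \<gamma>' k) \<in> ?T" by blast
    have "Inf ?T \<le> vnorm ?I (\<lambda>k. grad ?f x k + tmatvec (Hrows m1 m2 dbar) (Hmat m1 m2 Lf) \<gamma>' k)"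
      by (rule cInf_lower[OF mem bddT])
    then have "Inf ?T \<le> vnorm ?I (Dv v)" unfolding veq .
    then show "Inf ?T \<le> \<epsilon>h + \<delta>" using vn by linarith
  qed
  show ?thesis unfolding eps_stat_AP_def M_def[symmetric] using hx infT by simp
qed

end
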